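(* Let $G$ be a countable graph. The following are equivalent: (i) there exists a countable graph $G'$ such that $G$ and $G'$ are independent, i.e. $G \not\to G'$ and $G' \not\to G$; (ii) $G$ is not bipartite and $G$ does not contain $K_\omega$ as a subgraph.
   Context: All graphs are simple, undirected and loopless. A homomorphism $f: G \to G'$ is a map $V(G) \to V(G')$ such that $\{x,y\} \in E(G)$ implies $\{f(x),f(y)\} \in E(G')$. We write $G \to G'$ (or $G \le G'$) if a homomorphism exists, and $G \not\to G'$ otherwise. $K_\omega$ denotes the countably infinite complete graph. A set of graphs is independent if there is no homomorphism between any two distinct members of the set. *)

theory Defs
  imports Main "HOL-Library.Countable_Set"
begin

definition graph :: "'a set \<Rightarrow> ('a \<Rightarrow> 'a \<Rightarrow> bool) \<Rightarrow> bool" where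
  "graph V E \<longleftrightarrow> (\<forall>x y. E x y \<longrightarrow> x \<in> V \<and> y \<in> V) \<and> (\<forall>x y. E x y \<longrightarrow> E y x) \<and> (\<forall>x. \<not> E x x)"

definition countable_graph :: "'a set \<Rightarrow> ('a \<Rightarrow> 'a \<Rightarrow> bool) \<Rightarrow> bool" where
  "countable_graph V E \<longleftrightarrow> graph V E \<and> countable V"

definition is_hom :: "'a set \<Rightarrow> ('a \<Rightarrow> 'a \<Rightarrow> bool) \<Rightarrow> 'b set \<Rightarrow> ('b \<Rightarrow> 'b \<Rightarrow> bool) \<Rightarrow> ('a \<Rightarrow> 'b) \<Rightarrow> bool" where
  "is_hom V E V' E' f \<longleftrightarrow> f ` V \<subseteq> V' \<and> (\<forall>x y. E x y \<longrightarrow> E' (f x) (f y))"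

definition hom_exists :: "'a set \<Rightarrow> ('a \<Rightarrow> 'a \<Rightarrow> bool) \<Rightarrow> 'b set \<Rightarrow> ('b \<Rightarrow> 'b \<Rightarrow> bool) \<Rightarrow> bool" where
  "hom_exists V E V' E' \<longleftrightarrow> (\<exists>f. is_hom V E V' E' f)"

definition bipartite :: "'a set \<Rightarrow> ('a \<Rightarrow> 'a \<Rightarrow> bool) \<Rightarrow> bool" where
  "bipartite V E \<longleftrightarrow> (\<exists>A B. A \<union> B = V \<and> A \<inter> B = {} \<and>
      (\<forall>x y. E x y \<longrightarrow> (x \<in> A \<and> y \<in> B) \<or> (x \<in> B \<and> y \<in> A)))"

definition contains_K_omega :: "'a set \<Rightarrow> ('a \<Rightarrow> 'a \<Rightarrow> bool) \<Rightarrow> bool" where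
  "contains_K_omega V E \<longleftrightarrow> (\<exists>f :: nat \<Rightarrow> 'a. inj f \<and> range f \<subseteq> V \<and> (\<forall>i j. i \<noteq> j \<longrightarrow> E (f i) (f j)))"

end

theory Submission
  imports Defs "HOL-Library.Ramsey"
begin

definition walk :: "('a \<Rightarrow> 'a \<Rightarrow> bool) \<Rightarrow> nat \<Rightarrow> (nat \<Rightarrow> 'a) \<Rightarrow> bool" where
  "walk E n p \<longleftrightarrow> (\<forall>i<n. E (p i) (p (Suc i)))"

definition W :: "('a \<Rightarrow> 'a \<Rightarrow> bool) \<Rightarrow> 'a \<Rightarrow> 'a \<Rightarrow> nat \<Rightarrow> bool" where
  "W E x y n \<longleftrightarrow> (\<exists>p. walk E n p \<and> p 0 = x \<and> p n = y)"

lemma W_refl: "W E x x 0"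
  unfolding W_def walk_def by auto

lemma W_edge: "E x y \<Longrightarrow> W E x y 1"
  unfolding W_def walk_def by (rule exI[of _ "\<lambda>i. if i = 0 then x else y"]) auto

lemma W_sym:
  assumes "\<forall>x y. E x y \<longrightarrow> E y x" "W E x y n" shows "W E y x n"
proof -
  from assms(2) obtain p where p: "walk E n p" "p 0 = x" "p n = y" unfolding W_def by auto
  have "walk E n (\<lambda>i. p (n - i))"
    unfolding walk_def
  proof (intro allI impI)
    fix i assume "i < n"
    then have "E (p (n - Suc i)) (p (Suc (n - Suc i)))" using p(1) unfolding walk_def by auto
    moreover have "Suc (n - Suc i) = n - i" using \<open>i < n\<close> by auto
    ultimately show "E (p (n - i)) (p (n - Suc i))" using assms(1) by metis
  qed
  then show ?thesis unfolding W_def using p by (intro exI[of _ "\<lambda>i. p (n - i)"]) auto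
qed

lemma W_trans:
  assumes "W E x y n" "W E y z k" shows "W E x z (n + k)"
proof -
  from assms obtain p q where p: "walk E n p" "p 0 = x" "p n = y"
    and q: "walk E k q" "q 0 = y" "q k = z" unfolding W_def by auto
  define r where "r = (\<lambda>i. if i \<le> n then p i else q (i - n))"
  have "walk E (n + k) r"
    unfolding walk_def
  proof (intro allI impI)
    fix i assume i: "i < n + k"
    show "E (r i) (r (Suc i))"
    proof (cases "i < n")
      case True then show ?thesis using p(1) unfolding walk_def r_def by auto
    next
      case False
      then have "i - n < k" using i by auto
      then have "E (q (i - n)) (q (Suc (i - n)))" using q(1) unfolding walk_def by auto
      moreover have "Suc (i - n) = Suc i - n" using False by auto
      ultimately show ?thesis using False p q unfolding r_def
        by (cases "i = n") auto
    qed
  qed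
  moreover have "r 0 = x" "r (n + k) = z" using p q unfolding r_def by auto
  ultimately show ?thesis unfolding W_def by blast
qed

lemma nonbip_odd_walk:
  assumes g: "graph V E" and nb: "\<not> bipartite V E"
  shows "\<exists>n p. odd n \<and> walk E n p \<and> p n = p 0"
proof (rule ccontr)
  assume no: "\<not> ?thesis"
  have sym: "\<forall>x y. E x y \<longrightarrow> E y x" using g unfolding graph_def by auto
  have noW: "\<not> W E r r n" if "odd n" for r n
    using no that unfolding W_def by auto
  define rep where "rep v = (SOME u. \<exists>n. W E u v n)" for v
  have rep: "\<exists>n. W E (rep v) v n" for v
  proof -
    have "\<exists>u n. W E u v n" using W_refl[of E v] by blast
    then show ?thesis unfolding rep_def by (rule someI_ex)
  qed
  have rep_eq: "rep x = rep y" if "E x y" for x y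
  proof -
    have "(\<lambda>u. \<exists>n. W E u x n) = (\<lambda>u. \<exists>n. W E u y n)"
    proof (intro ext iffI)
      fix u assume "\<exists>n. W E u x n"
      then obtain n where "W E u x n" by auto
      then have "W E u y (n + 1)" using W_trans W_edge that by metis
      then show "\<exists>n. W E u y n" by auto
    next
      fix u assume "\<exists>n. W E u y n"
      then obtain n where "W E u y n" by auto
      then have "W E u x (n + 1)" using W_trans W_edge sym that by metis
      then show "\<exists>n. W E u x n" by auto
    qed
    then show ?thesis unfolding rep_def by simp
  qed
  define A where "A = {v \<in> V. \<exists>n. even n \<and> W E (rep v) v n}"
  define B where "B = V - A"
  have "bipartite V E"
    unfolding bipartite_def
  proof (intro exI conjI allI impI)
    show "A \<union> B = V" "A \<inter> B = {}" unfolding A_def B_def by auto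
    fix x y assume e: "E x y"
    then have xy: "x \<in> V" "y \<in> V" using g unfolding graph_def by auto
    have r: "rep x = rep y" using rep_eq e .
    obtain a where a: "W E (rep x) x a" using rep by blast
    obtain b where b: "W E (rep x) y b" using rep r by metis
    have cl: "False" if "W E (rep x) x n1" "W E (rep x) y n2" "odd (n1 + 1 + n2)" for n1 n2
      using noW[OF that(3)] W_trans[OF W_trans[OF that(1) W_edge[of E x y, OF e]] W_sym[OF sym that(2)]] by blast
    have ax: "x \<in> A \<longleftrightarrow> (\<exists>n. even n \<and> W E (rep x) x n)" using xy unfolding A_def by auto
    have ay: "y \<in> A \<longleftrightarrow> (\<exists>n. even n \<and> W E (rep x) y n)" using xy r unfolding A_def by auto
    show "x \<in> A \<and> y \<in> B \<or> x \<in> B \<and> y \<in> A"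
    proof (cases "x \<in> A")
      case True
      then obtain n1 where n1: "even n1" "W E (rep x) x n1" using ax by auto
      have "y \<notin> A"
      proof
        assume "y \<in> A"
        then obtain n2 where "even n2" "W E (rep x) y n2" using ay by auto
        then show False using cl[OF n1(2)] n1(1) by auto
      qed
      then show ?thesis using True xy unfolding B_def by auto
    next
      case False
      then have "odd a" using ax a by auto
      have "y \<in> A"
      proof (rule ccontr)
        assume "y \<notin> A"
        then have "odd b" using ay b by auto
        then show False using cl[OF a b] \<open>odd a\<close> by auto
      qed
      then show ?thesis using False xy unfolding B_def by auto
    qed
  qed
  then show False using nb by simp
qed


definition SV :: "nat \<Rightarrow> nat list set" where
  "SV m = {xs. length xs = m \<and> sorted_wrt (<) xs}"

definition SE :: "nat \<Rightarrow> nat list \<Rightarrow> nat list \<Rightarrow> bool" where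
  "SE m u v \<longleftrightarrow> u \<in> SV m \<and> v \<in> SV m \<and> (tl u = butlast v \<or> tl v = butlast u)"

lemma SV_distinct: "xs \<in> SV m \<Longrightarrow> distinct xs"
  unfolding SV_def by (simp add: strict_sorted_iff)

lemma SE_irrefl:
  assumes "m \<ge> 2" shows "\<not> SE m u u"
proof
  assume "SE m u u"
  then have u: "length u = m" "sorted_wrt (<) u" "tl u = butlast u" unfolding SE_def SV_def by auto
  have "tl u ! 0 = u ! 1" using u(1) assms by (simp add: nth_tl)
  moreover have "butlast u ! 0 = u ! 0" using u(1) assms by (simp add: nth_butlast)
  moreover have "u ! 0 < u ! 1" using u assms sorted_wrt_nth_less[of "(<)" u 0 1] by auto
  ultimately show False using u by simp
qed

lemma SE_graph: "m \<ge> 2 \<Longrightarrow> graph (SV m) (SE m)"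
  unfolding graph_def using SE_irrefl by (auto simp: SE_def)

lemma SV_countable: "countable_graph (SV m) (SE m)" if "m \<ge> 2"
  unfolding countable_graph_def using SE_graph[OF that] by auto

lemma shift_no_short_odd:
  assumes Lodd: "odd L" and w: "walk (SE (2*L+1)) L p" and cl: "p L = p 0"
  shows False
proof -
  define m where "m = 2*L+1"
  have L0: "L > 0" using Lodd by (cases L) auto
  have mem: "p t \<in> SV m" if "t \<le> L" for t
  proof (cases "t < L")
    case True then show ?thesis using w unfolding walk_def SE_def m_def by auto
  next
    case False
    then have "t = L" using that by auto
    moreover have "p 0 \<in> SV m" using w L0 unfolding walk_def SE_def m_def by auto
    ultimately show ?thesis using cl by simp
  qed
  have len: "length (p t) = m" if "t \<le> L" for t using mem[OF that] unfolding SV_def by auto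
  have claim: "\<exists>d::int. \<bar>d\<bar> \<le> int t \<and> even (d + int t) \<and> p t ! nat (int L - d) = p 0 ! L" if "t \<le> L" for t
    using that
  proof (induction t)
    case 0 then show ?case by (intro exI[of _ 0]) auto
  next
    case (Suc t)
    then obtain d where d: "\<bar>d\<bar> \<le> int t" "even (d + int t)" "p t ! nat (int L - d) = p 0 ! L" by auto
    define q where "q = nat (int L - d)"
    have q1: "q \<ge> 1" "q + 1 < m" using d(1) Suc.prems unfolding q_def m_def by auto
    have lt: "length (p t) = m" "length (p (Suc t)) = m" using len Suc.prems by auto
    have "SE m (p t) (p (Suc t))" using w Suc.prems unfolding walk_def m_def by auto
    then have "tl (p t) = butlast (p (Suc t)) \<or> tl (p (Suc t)) = butlast (p t)" unfolding SE_def by auto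
    then show ?case
    proof
      assume h: "tl (p t) = butlast (p (Suc t))"
      have "p (Suc t) ! (q - 1) = butlast (p (Suc t)) ! (q - 1)" using lt q1 by (simp add: nth_butlast)
      also have "\<dots> = tl (p t) ! (q - 1)" using h by simp
      also have "\<dots> = p t ! q" using lt q1 by (simp add: nth_tl)
      finally have "p (Suc t) ! (q - 1) = p 0 ! L" using d(3) unfolding q_def by simp
      moreover have "nat (int L - (d + 1)) = q - 1" using q1 unfolding q_def by linarith
      ultimately have "p (Suc t) ! nat (int L - (d + 1)) = p 0 ! L" by simp
      then show ?case using d(1,2) by (intro exI[of _ "d + 1"]) auto
    next
      assume h: "tl (p (Suc t)) = butlast (p t)"
      have "p (Suc t) ! (q + 1) = tl (p (Suc t)) ! q" using lt q1 by (simp add: nth_tl)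
      also have "\<dots> = butlast (p t) ! q" using h by simp
      also have "\<dots> = p t ! q" using lt q1 by (simp add: nth_butlast)
      finally have "p (Suc t) ! (q + 1) = p 0 ! L" using d(3) unfolding q_def by simp
      moreover have "nat (int L - (d - 1)) = q + 1" using q1 unfolding q_def by linarith
      ultimately have "p (Suc t) ! nat (int L - (d - 1)) = p 0 ! L" by simp
      then show ?case using d(1,2) by (intro exI[of _ "d - 1"]) auto
    qed
  qed
  obtain d where d: "\<bar>d\<bar> \<le> int L" "even (d + int L)" "p L ! nat (int L - d) = p 0 ! L"
    using claim[of L] by auto
  have "d \<noteq> 0" using d(2) Lodd by auto
  then have ne: "nat (int L - d) \<noteq> L" using d(1) by (auto simp: nat_eq_iff)
  have bnd: "nat (int L - d) < length (p 0)" "L < length (p 0)" using len[of 0] d(1) unfolding m_def by auto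
  have "p 0 ! nat (int L - d) = p 0 ! L" using d(3) cl by simp
  then show False using ne bnd SV_distinct[OF mem[of 0]] nth_eq_iff_index_eq by blast
qed


lemma sls_set: "sorted_wrt (<) (x::nat list) \<Longrightarrow> sorted_list_of_set (set x) = x"
  by (simp add: sorted_list_of_set_sort_remdups strict_sorted_iff distinct_remdups_id sorted_sort_id)

lemma sls_SV: "finite X \<Longrightarrow> card X = m \<Longrightarrow> sorted_list_of_set (X::nat set) \<in> SV m"
  unfolding SV_def by (simp add: strict_sorted_list_of_set)

lemma exists_SV_above:
  assumes "infinite (Y::nat set)"
  shows "\<exists>c. c \<in> SV m \<and> set c \<subseteq> Y \<and> (\<forall>y\<in>set c. N < y)"
proof -
  have "infinite (Y \<inter> {N<..})"
  proof
    assume "finite (Y \<inter> {N<..})"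
    then have "finite (Y \<inter> {N<..} \<union> {..N})" by simp
    moreover have "Y \<subseteq> Y \<inter> {N<..} \<union> {..N}" by auto
    ultimately show False using assms finite_subset by blast
  qed
  then obtain X where X: "finite X" "card X = m" "X \<subseteq> Y \<inter> {N<..}"
    using infinite_arbitrarily_large by blast
  show ?thesis
    by (rule exI[of _ "sorted_list_of_set X"]) (use X sls_SV in auto)
qed

lemma shift_connected:
  assumes Y: "infinite (Y::nat set)"
    and u: "u \<in> SV m" "set u \<subseteq> Y" and v: "v \<in> SV m" "set v \<subseteq> Y"
    and h: "\<And>a b. a \<in> SV m \<Longrightarrow> set a \<subseteq> Y \<Longrightarrow> b \<in> SV m \<Longrightarrow> set b \<subseteq> Y \<Longrightarrow> SE m a b \<Longrightarrow> h a = h b"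
  shows "h u = h v"
proof -
  have main: "h x = h c" if x: "x \<in> SV m" "set x \<subseteq> Y" and c: "c \<in> SV m" "set c \<subseteq> Y"
    and above: "\<forall>a\<in>set x. \<forall>b\<in>set c. a < b" for x c
  proof -
    have lx: "length x = m" and lc: "length c = m" using x c unfolding SV_def by auto
    define a where "a k = drop k x @ take k c" for k
    have aSV: "a k \<in> SV m" "set (a k) \<subseteq> Y" if "k \<le> m" for k
    proof -
      show "a k \<in> SV m" using that x c above lx lc unfolding SV_def a_def
        by (auto simp: sorted_wrt_append dest!: in_set_dropD in_set_takeD)
      show "set (a k) \<subseteq> Y" using x c unfolding a_def
        by (auto dest!: in_set_dropD in_set_takeD)
    qed
    have "h x = h (a k)" if "k \<le> m" for k
      using that
    proof (induction k)
      case 0 then show ?case by (simp add: a_def)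
    next
      case (Suc k)
      have k: "k < m" using Suc.prems by auto
      have "c \<noteq> []" using k lc by auto
      have "tl (a k) = butlast (a (Suc k))"
        using k lx lc \<open>c \<noteq> []\<close> unfolding a_def
        by (simp add: butlast_append butlast_take tl_drop drop_Suc)
      then have "SE m (a k) (a (Suc k))" using aSV[of k] aSV[of "Suc k"] k unfolding SE_def by auto
      then have "h (a k) = h (a (Suc k))" using h aSV[of k] aSV[of "Suc k"] k by auto
      then show ?case using Suc k by auto
    qed
    from this[of m] show ?thesis using lx lc by (simp add: a_def)
  qed
  define N where "N = Max (insert 0 (set u \<union> set v))"
  have le: "a \<le> N" if "a \<in> set u \<union> set v" for a unfolding N_def using that by auto
  obtain c where c: "c \<in> SV m" "set c \<subseteq> Y" "\<forall>y\<in>set c. N < y" using exists_SV_above[OF Y] by blast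
  have "h u = h c" by (rule main) (use u c le in force)+
  moreover have "h v = h c" by (rule main) (use v c le in force)+
  ultimately show ?thesis by simp
qed


definition CV :: "'a set \<Rightarrow> ('a \<Rightarrow> 'a \<Rightarrow> bool) \<Rightarrow> 'a list set" where
  "CV V E = {s. set s \<subseteq> V \<and> distinct s \<and>
     (\<forall>i j. i < length s \<longrightarrow> j < length s \<longrightarrow> i \<noteq> j \<longrightarrow> E (s!i) (s!j))}"

definition CE :: "'a set \<Rightarrow> ('a \<Rightarrow> 'a \<Rightarrow> bool) \<Rightarrow> 'a list \<Rightarrow> 'a list \<Rightarrow> bool" where
  "CE V E s t \<longleftrightarrow> s \<in> CV V E \<and> t \<in> CV V E \<and>
     ((\<exists>ys. ys \<noteq> [] \<and> t = s @ ys) \<or> (\<exists>ys. ys \<noteq> [] \<and> s = t @ ys))"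

lemma CV_prefix: "s @ ys \<in> CV V E \<Longrightarrow> s \<in> CV V E"
  unfolding CV_def
proof (safe)
  fix i j assume h: "\<forall>i j. i < length (s @ ys) \<longrightarrow> j < length (s @ ys) \<longrightarrow> i \<noteq> j \<longrightarrow> E ((s @ ys) ! i) ((s @ ys) ! j)"
    and ij: "i < length s" "j < length s" "i \<noteq> j"
  then show "E (s ! i) (s ! j)" using h[rule_format, of i j] by (simp add: nth_append)
qed auto

lemma CE_graph: "graph (CV V E) (CE V E)"
  unfolding graph_def CE_def by auto

lemma CE_countable: "countable V \<Longrightarrow> countable_graph (CV V E) (CE V E)"
  unfolding countable_graph_def using CE_graph
proof -
  assume "countable V"
  then have "countable (lists V)" by simp
  moreover have "CV V E \<subseteq> lists V" unfolding CV_def by auto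
  ultimately show "graph (CV V E) (CE V E) \<and> countable (CV V E)"
    using CE_graph countable_subset by blast
qed

primrec sq :: "('a list \<Rightarrow> 'a) \<Rightarrow> nat \<Rightarrow> 'a list" where
  "sq f 0 = []"
| "sq f (Suc n) = sq f n @ [f (sq f n)]"

lemma sq_len: "length (sq f n) = n"
  by (induction n) auto

lemma sq_prefix: "i \<le> n \<Longrightarrow> \<exists>ys. sq f n = sq f i @ ys"
proof (induction n)
  case 0 then show ?case by auto
next
  case (Suc n)
  show ?case
  proof (cases "i = Suc n")
    case True then show ?thesis by auto
  next
    case False
    then obtain ys where "sq f n = sq f i @ ys" using Suc by auto
    then show ?thesis by auto
  qed
qed

lemma sq_nth: "i < n \<Longrightarrow> sq f n ! i = f (sq f i)"
proof (induction n)
  case 0 then show ?case by auto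
next
  case (Suc n)
  then show ?case by (cases "i = n") (auto simp: nth_append sq_len)
qed

lemma tree_not_to_G:
  assumes g: "graph V E" and f: "is_hom (CV V E) (CE V E) V E f"
  shows "contains_K_omega V E"
proof -
  have fV: "f s \<in> V" if "s \<in> CV V E" for s using f that unfolding is_hom_def by auto
  have fE: "E (f s) (f t)" if "CE V E s t" for s t using f that unfolding is_hom_def by auto
  have irr: "\<not> E x x" for x using g unfolding graph_def by auto
  have sym: "E x y \<Longrightarrow> E y x" for x y using g unfolding graph_def by auto
  have sqC: "sq f n \<in> CV V E" for n
  proof (induction n)
    case 0 then show ?case unfolding CV_def by auto
  next
    case (Suc n)
    define s where "s = sq f n"
    have sC: "s \<in> CV V E" using Suc s_def by simp
    have adj: "E (s ! i) (f s)" if il: "i < n" for i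
    proof -
      obtain ys where ys: "s = sq f i @ ys" using sq_prefix[of i n f] il s_def by auto
      have "ys \<noteq> []" using ys sq_len[of f i] sq_len[of f n] il s_def by auto
      then have "CE V E (sq f i) s" using ys sC CV_prefix[of "sq f i" ys] unfolding CE_def by auto
      then have "E (f (sq f i)) (f s)" by (rule fE)
      then show ?thesis using sq_nth[OF il, of f] s_def by simp
    qed
    have ln: "length s = n" using sq_len s_def by simp
    have notin: "f s \<notin> set s"
    proof
      assume "f s \<in> set s"
      then obtain i where "i < n" "s ! i = f s" using ln by (auto simp: in_set_conv_nth)
      then show False using adj irr by metis
    qed
    have "s @ [f s] \<in> CV V E"
      unfolding CV_def
    proof (intro CollectI conjI allI impI)
      show "set (s @ [f s]) \<subseteq> V" using sC fV unfolding CV_def by auto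
      show "distinct (s @ [f s])" using sC notin unfolding CV_def by auto
      fix i j assume ij: "i < length (s @ [f s])" "j < length (s @ [f s])" "i \<noteq> j"
      show "E ((s @ [f s]) ! i) ((s @ [f s]) ! j)"
      proof (cases "i < n \<and> j < n")
        case True then show ?thesis using sC ij ln unfolding CV_def by (auto simp: nth_append)
      next
        case False
        then have "(i = n \<and> j < n) \<or> (j = n \<and> i < n)" using ij ln by auto
        then show ?thesis using adj sym ln by (auto simp: nth_append)
      qed
    qed
    then show ?case using s_def by simp
  qed
  define h where "h n = f (sq f n)" for n
  have hE: "E (h i) (h j)" if "i \<noteq> j" for i j
  proof -
    define k where "k = Suc (max i j)"
    have "i < k" "j < k" unfolding k_def by auto
    then have "E (sq f k ! i) (sq f k ! j)" using sqC[of k] that sq_len[of f k]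
      unfolding CV_def by auto
    then show ?thesis using sq_nth[of i k f] sq_nth[of j k f] \<open>i < k\<close> \<open>j < k\<close>
      unfolding h_def by simp
  qed
  have "inj h"
    by (rule injI) (use hE irr in metis)
  moreover have "range h \<subseteq> V" using fV sqC unfolding h_def by auto
  ultimately show ?thesis unfolding contains_K_omega_def using hE by blast
qed


lemma take_drop_shift:
  assumes "length zs = Suc m" shows "tl (take m zs) = butlast (drop 1 zs)"
  using assms by (intro nth_equalityI) (auto simp: nth_tl nth_butlast)

lemma shift_to_tree_K:
  assumes g: "graph V E" and m: "m \<ge> 1" and f: "is_hom (SV m) (SE m) (CV V E) (CE V E) f"
  shows "contains_K_omega V E"
proof -
  have fC: "f x \<in> CV V E" if "x \<in> SV m" for x using f that unfolding is_hom_def by auto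
  have fE: "CE V E (f a) (f b)" if "SE m a b" for a b using f that unfolding is_hom_def by auto
  have irr: "\<not> E x x" for x using g unfolding graph_def by auto
  define P where "P B t \<longleftrightarrow> infinite (B::nat set) \<and> (\<forall>x \<in> SV m. set x \<subseteq> B \<longrightarrow> (\<exists>ys. f x = t @ ys))"
    for B t
  have step: "\<exists>B' c. P B' (t @ [c])" if PB: "P B t" for B t
  proof -
    define col where "col X = (if f (sorted_list_of_set X) = t then 0 else 1::nat)" for X
    have "\<forall>X. X \<subseteq> B \<and> finite X \<and> card X = m \<longrightarrow> col X < 2" unfolding col_def by auto
    then obtain Y k where Y: "Y \<subseteq> B" "infinite Y" "k < 2"
      "\<forall>X. X \<subseteq> Y \<and> finite X \<and> card X = m \<longrightarrow> col X = k"
      using Ramsey[of B m col 2] PB unfolding P_def by blast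
    have colx: "f x = t \<longleftrightarrow> k = 0" if x: "x \<in> SV m" "set x \<subseteq> Y" for x
    proof -
      have "card (set x) = m" using x SV_distinct[OF x(1)] distinct_card unfolding SV_def by fastforce
      then have "col (set x) = k" using Y(4) x by auto
      moreover have "sorted_list_of_set (set x) = x" using x sls_set unfolding SV_def by auto
      ultimately show ?thesis unfolding col_def by (auto split: if_splits)
    qed
    show ?thesis
    proof (cases "k = 0")
      case True
      obtain zs where zs: "zs \<in> SV (Suc m)" "set zs \<subseteq> Y" using exists_SV_above[OF Y(2)] by blast
      define u where "u = take m zs"
      define v where "v = drop 1 zs"
      have lz: "length zs = Suc m" using zs unfolding SV_def by auto
      have uv: "u \<in> SV m" "v \<in> SV m" "set u \<subseteq> Y" "set v \<subseteq> Y"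
        using zs lz unfolding u_def v_def SV_def by (auto dest!: in_set_takeD in_set_dropD)
      have "tl u = butlast v" using take_drop_shift[OF lz] unfolding u_def v_def .
      then have "SE m u v" using uv unfolding SE_def by auto
      then have "CE V E (f u) (f v)" by (rule fE)
      moreover have "f u = t" "f v = t" using colx uv True by auto
      moreover have "\<not> CE V E t t" using CE_graph[of V E] unfolding graph_def by blast
      ultimately show ?thesis by simp
    next
      case False
      have ext: "\<exists>ys. ys \<noteq> [] \<and> f x = t @ ys" if x: "x \<in> SV m" "set x \<subseteq> Y" for x
      proof -
        obtain ys where "f x = t @ ys" using PB x Y(1) unfolding P_def by blast
        moreover have "f x \<noteq> t" using colx[OF x] False by auto
        ultimately show ?thesis by auto
      qed
      define nx where "nx x = f x ! length t" for x
      have hx: "nx a = nx b" if ab: "a \<in> SV m" "set a \<subseteq> Y" "b \<in> SV m" "set b \<subseteq> Y" "SE m a b" for a b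
      proof -
        obtain ya where ya: "ya \<noteq> []" "f a = t @ ya" using ext ab(1,2) by blast
        obtain yb where yb: "yb \<noteq> []" "f b = t @ yb" using ext ab(3,4) by blast
        have "CE V E (f a) (f b)" using fE ab(5) by blast
        then have "(\<exists>zs. f b = f a @ zs) \<or> (\<exists>zs. f a = f b @ zs)" unfolding CE_def by blast
        then show ?thesis
        proof
          assume "\<exists>zs. f b = f a @ zs"
          then obtain zs where zs: "f b = f a @ zs" by blast
          have "length t < length (f a)" using ya by simp
          then show ?thesis unfolding nx_def zs by (simp add: nth_append)
        next
          assume "\<exists>zs. f a = f b @ zs"
          then obtain zs where zs: "f a = f b @ zs" by blast
          have "length t < length (f b)" using yb by simp
          then show ?thesis unfolding nx_def zs by (simp add: nth_append)
        qed
      qed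
      obtain x0 where x0: "x0 \<in> SV m" "set x0 \<subseteq> Y" using exists_SV_above[OF Y(2)] by blast
      have "P Y (t @ [nx x0])"
        unfolding P_def
      proof (intro conjI ballI impI)
        show "infinite Y" by (rule Y(2))
        fix x assume x: "x \<in> SV m" "set x \<subseteq> Y"
        have same: "nx x = nx x0"
          using shift_connected[OF Y(2) x x0, of nx] hx by blast
        obtain ys where ys: "ys \<noteq> []" "f x = t @ ys" using ext x by blast
        then obtain y ys' where "ys = y # ys'" by (cases ys) auto
        then have "f x = (t @ [nx x]) @ ys'" using ys unfolding nx_def by auto
        then show "\<exists>ys. f x = (t @ [nx x0]) @ ys" using same by auto
      qed
      then show ?thesis by blast
    qed
  qed
  define nxt where "nxt p = (SOME q. P (fst q) (snd q) \<and> (\<exists>c. snd q = snd p @ [c]))"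
    for p :: "nat set \<times> 'a list"
  define sqq where "sqq n = (nxt ^^ n) (UNIV, [])" for n
  have nxt_ok: "P (fst (nxt p)) (snd (nxt p)) \<and> (\<exists>c. snd (nxt p) = snd p @ [c])"
    if Pp: "P (fst p) (snd p)" for p
  proof -
    obtain B' c where "P B' (snd p @ [c])" using step[OF Pp] by blast
    then have "\<exists>q. P (fst q) (snd q) \<and> (\<exists>c. snd q = snd p @ [c])"
      by (intro exI[of _ "(B', snd p @ [c])"]) auto
    then show ?thesis unfolding nxt_def by (rule someI_ex)
  qed
  have Pn: "P (fst (sqq n)) (snd (sqq n))" for n
  proof (induction n)
    case 0 then show ?case unfolding sqq_def P_def by auto
  next
    case (Suc n) then show ?case using nxt_ok unfolding sqq_def by auto
  qed
  define T where "T n = snd (sqq n)" for n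
  have Tsuc: "\<exists>c. T (Suc n) = T n @ [c]" for n
    using nxt_ok[OF Pn[of n]] unfolding T_def sqq_def by auto
  have Tlen: "length (T n) = n" for n
  proof (induction n)
    case 0 then show ?case unfolding T_def sqq_def by auto
  next
    case (Suc n) then show ?case using Tsuc[of n] by auto
  qed
  have Tpre: "\<exists>ys. T n = T i @ ys" if "i \<le> n" for i n
    using that
  proof (induction n)
    case 0 then show ?case by auto
  next
    case (Suc n)
    show ?case
    proof (cases "i = Suc n")
      case True then show ?thesis by auto
    next
      case False
      then obtain ys where "T n = T i @ ys" using Suc by auto
      moreover obtain c where "T (Suc n) = T n @ [c]" using Tsuc by blast
      ultimately show ?thesis by auto
    qed
  qed
  have TC: "T n \<in> CV V E" for n
  proof -
    have inf: "infinite (fst (sqq n))" using Pn[of n] unfolding P_def by auto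
    obtain x where x: "x \<in> SV m" "set x \<subseteq> fst (sqq n)" using exists_SV_above[OF inf] by blast
    obtain ys where "f x = T n @ ys" using Pn[of n] x unfolding P_def T_def by blast
    then show ?thesis using fC[OF x(1)] CV_prefix by metis
  qed
  define h where "h i = T (Suc i) ! i" for i
  have Tnth: "T k ! i = h i" if ik: "i < k" for i k
  proof -
    obtain ys where "T k = T (Suc i) @ ys" using Tpre[of "Suc i" k] ik by auto
    then show ?thesis unfolding h_def using Tlen[of "Suc i"] by (simp add: nth_append)
  qed
  have hE: "E (h i) (h j)" if "i \<noteq> j" for i j
  proof -
    define k where "k = Suc (max i j)"
    have ik: "i < k" "j < k" unfolding k_def by auto
    then have "E (T k ! i) (T k ! j)" using TC[of k] that Tlen[of k]
      unfolding CV_def by auto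
    then show ?thesis using Tnth ik by simp
  qed
  have hV: "h i \<in> V" for i
  proof -
    have "T (Suc i) ! i \<in> set (T (Suc i))" using Tlen[of "Suc i"] by simp
    then show ?thesis using TC[of "Suc i"] unfolding CV_def h_def by auto
  qed
  have "inj h"
    by (rule injI) (use hE irr in metis)
  then show ?thesis unfolding contains_K_omega_def using hE hV by blast
qed


lemma hom_comp: "is_hom A EA B EB g \<Longrightarrow> is_hom B EB C EC h \<Longrightarrow> is_hom A EA C EC (h \<circ> g)"
  unfolding is_hom_def image_subset_iff by auto

lemma hom_walk: "is_hom V E V' E' f \<Longrightarrow> walk E n p \<Longrightarrow> walk E' n (f \<circ> p)"
  unfolding is_hom_def walk_def by auto

lemma to_nat_graph:
  fixes W :: "'b set" and F :: "'b \<Rightarrow> 'b \<Rightarrow> bool"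
  assumes cg: "countable_graph W F"
  shows "\<exists>(V'::nat set) E'. countable_graph V' E' \<and>
    (\<forall>(V::'a set) E. (hom_exists V E V' E' \<longleftrightarrow> hom_exists V E W F) \<and>
                    (hom_exists V' E' V E \<longleftrightarrow> hom_exists W F V E))"
proof -
  have g: "graph W F" and c: "countable W" using cg unfolding countable_graph_def by auto
  define h where "h = to_nat_on W"
  have inj: "inj_on h W" unfolding h_def by (rule inj_on_to_nat_on[OF c])
  define iv where "iv = inv_into W h"
  have iv_h: "iv (h a) = a" if "a \<in> W" for a unfolding iv_def using inj that by simp
  have iv_in: "iv x \<in> W" if "x \<in> h ` W" for x unfolding iv_def using that by (simp add: inv_into_into)
  have h_iv: "h (iv x) = x" if "x \<in> h ` W" for x unfolding iv_def using that by (simp add: f_inv_into_f)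
  define V' where "V' = h ` W"
  define E' where "E' x y \<longleftrightarrow> x \<in> V' \<and> y \<in> V' \<and> F (iv x) (iv y)" for x y
  have FW: "F a b \<Longrightarrow> a \<in> W \<and> b \<in> W" for a b using g unfolding graph_def by auto
  have "graph V' E'" unfolding graph_def E'_def using g unfolding graph_def by auto
  moreover have "countable V'" unfolding V'_def using c by simp
  ultimately have "countable_graph V' E'" unfolding countable_graph_def by auto
  moreover have "(hom_exists V E V' E' \<longleftrightarrow> hom_exists V E W F) \<and>
                    (hom_exists V' E' V E \<longleftrightarrow> hom_exists W F V E)" for V :: "'a set" and E
  proof (intro conjI iffI)
    assume "hom_exists V E V' E'"
    then obtain f where f: "is_hom V E V' E' f" unfolding hom_exists_def by auto
    have "is_hom V E W F (iv \<circ> f)"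
      using f iv_in unfolding is_hom_def E'_def V'_def by auto
    then show "hom_exists V E W F" unfolding hom_exists_def by auto
  next
    assume "hom_exists V E W F"
    then obtain f where f: "is_hom V E W F f" unfolding hom_exists_def by auto
    have "is_hom V E V' E' (h \<circ> f)"
      unfolding is_hom_def E'_def V'_def
    proof (intro conjI allI impI)
      show "(h \<circ> f) ` V \<subseteq> h ` W" using f unfolding is_hom_def by auto
      fix x y assume "E x y"
      then have "F (f x) (f y)" using f unfolding is_hom_def by auto
      then show "(h \<circ> f) x \<in> h ` W" "(h \<circ> f) y \<in> h ` W" "F (iv ((h \<circ> f) x)) (iv ((h \<circ> f) y))"
        using FW iv_h by auto
    qed
    then show "hom_exists V E V' E'" unfolding hom_exists_def by auto
  next
    assume "hom_exists V' E' V E"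
    then obtain f where f: "is_hom V' E' V E f" unfolding hom_exists_def by auto
    have "is_hom W F V E (f \<circ> h)"
      unfolding is_hom_def
    proof (intro conjI allI impI)
      show "(f \<circ> h) ` W \<subseteq> V" using f unfolding is_hom_def V'_def by auto
      fix a b assume "F a b"
      then have "E' (h a) (h b)" unfolding E'_def V'_def using FW iv_h by auto
      then show "E ((f \<circ> h) a) ((f \<circ> h) b)" using f unfolding is_hom_def by auto
    qed
    then show "hom_exists W F V E" unfolding hom_exists_def by auto
  next
    assume "hom_exists W F V E"
    then obtain f where f: "is_hom W F V E f" unfolding hom_exists_def by auto
    have "is_hom V' E' V E (f \<circ> iv)"
      using f iv_in unfolding is_hom_def E'_def V'_def by auto
    then show "hom_exists V' E' V E" unfolding hom_exists_def by auto
  qed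
  ultimately show ?thesis by blast
qed

lemma bip_comparable:
  assumes b: "bipartite V E" and g: "graph V E" and g': "graph V' E'"
  shows "hom_exists V E V' E' \<or> hom_exists V' E' V E"
proof -
  obtain A B where AB: "A \<union> B = V" "A \<inter> B = {}"
    "\<forall>x y. E x y \<longrightarrow> (x \<in> A \<and> y \<in> B) \<or> (x \<in> B \<and> y \<in> A)"
    using b unfolding bipartite_def by blast
  show ?thesis
  proof (cases "\<exists>x y. E' x y")
    case True
    then obtain x y where xy: "E' x y" by blast
    have "is_hom V E V' E' (\<lambda>v. if v \<in> A then x else y)"
      unfolding is_hom_def
    proof (intro conjI allI impI)
      show "(\<lambda>v. if v \<in> A then x else y) ` V \<subseteq> V'" using xy g' unfolding graph_def by auto
      fix u v assume "E u v"
      then have "(u \<in> A \<and> v \<in> B) \<or> (u \<in> B \<and> v \<in> A)" using AB by auto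
      then show "E' (if u \<in> A then x else y) (if v \<in> A then x else y)"
        using xy g' AB(2) unfolding graph_def by auto
    qed
    then show ?thesis unfolding hom_exists_def by auto
  next
    case False
    show ?thesis
    proof (cases "V = {}")
      case True
      have "is_hom V E V' E' (\<lambda>_. undefined)" using True g unfolding is_hom_def graph_def by auto
      then show ?thesis unfolding hom_exists_def by auto
    next
      case ne: False
      then obtain v0 where "v0 \<in> V" by auto
      then have "is_hom V' E' V E (\<lambda>_. v0)" using False unfolding is_hom_def by auto
      then show ?thesis unfolding hom_exists_def by auto
    qed
  qed
qed

lemma K_receives:
  assumes K: "contains_K_omega V E" and g': "graph (V'::nat set) E'"
  shows "hom_exists V' E' V E"
proof -
  obtain f :: "nat \<Rightarrow> _" where f: "inj f" "range f \<subseteq> V" "\<forall>i j. i \<noteq> j \<longrightarrow> E (f i) (f j)"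
    using K unfolding contains_K_omega_def by blast
  have "is_hom V' E' V E f"
    unfolding is_hom_def
  proof (intro conjI allI impI)
    show "f ` V' \<subseteq> V" using f by auto
    fix x y assume "E' x y"
    then have "x \<noteq> y" using g' unfolding graph_def by auto
    then show "E (f x) (f y)" using f by auto
  qed
  then show ?thesis unfolding hom_exists_def by auto
qed

theorem theorem1:
  fixes V :: "'a set" and E :: "'a \<Rightarrow> 'a \<Rightarrow> bool"
  assumes "countable_graph V E"
  shows "(\<exists>(V' :: nat set) E'. countable_graph V' E' \<and>
            \<not> hom_exists V E V' E' \<and> \<not> hom_exists V' E' V E)
         \<longleftrightarrow> (\<not> bipartite V E \<and> \<not> contains_K_omega V E)"
proof
  have g: "graph V E" using assms unfolding countable_graph_def by auto
  assume "\<exists>(V' :: nat set) E'. countable_graph V' E' \<and>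
            \<not> hom_exists V E V' E' \<and> \<not> hom_exists V' E' V E"
  then obtain V' :: "nat set" and E' where h: "countable_graph V' E'"
    "\<not> hom_exists V E V' E'" "\<not> hom_exists V' E' V E" by blast
  have g': "graph V' E'" using h(1) unfolding countable_graph_def by auto
  show "\<not> bipartite V E \<and> \<not> contains_K_omega V E"
    using bip_comparable[OF _ g g'] K_receives[OF _ g'] h by blast
next
  have g: "graph V E" and c: "countable V" using assms unfolding countable_graph_def by auto
  assume nb: "\<not> bipartite V E \<and> \<not> contains_K_omega V E"
  obtain L p where Lp: "odd L" "walk E L p" "p L = p 0" using nonbip_odd_walk[OF g] nb by blast
  define m where "m = 2 * L + 1"
  have m2: "m \<ge> 2" using Lp(1) unfolding m_def by (cases L) auto
  show "\<exists>(V' :: nat set) E'. countable_graph V' E' \<and>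
            \<not> hom_exists V E V' E' \<and> \<not> hom_exists V' E' V E"
  proof (cases "hom_exists (SV m) (SE m) V E")
    case True
    then obtain \<psi> where psi: "is_hom (SV m) (SE m) V E \<psi>" unfolding hom_exists_def by auto
    have cg: "countable_graph (CV V E) (CE V E)" using CE_countable[OF c] .
    have n1: "\<not> hom_exists (CV V E) (CE V E) V E"
      using tree_not_to_G[OF g] nb unfolding hom_exists_def by blast
    have n2: "\<not> hom_exists V E (CV V E) (CE V E)"
    proof
      assume "hom_exists V E (CV V E) (CE V E)"
      then obtain \<phi> where "is_hom V E (CV V E) (CE V E) \<phi>" unfolding hom_exists_def by auto
      then have hc: "is_hom (SV m) (SE m) (CV V E) (CE V E) (\<phi> \<circ> \<psi>)" using hom_comp psi by blast
      have "m \<ge> 1" using m2 by simp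
      from shift_to_tree_K[OF g this hc] show False using nb by blast
    qed
    obtain V' :: "nat set" and E' where V': "countable_graph V' E'"
      "\<forall>(X::'a set) R. (hom_exists X R V' E' \<longleftrightarrow> hom_exists X R (CV V E) (CE V E)) \<and>
                    (hom_exists V' E' X R \<longleftrightarrow> hom_exists (CV V E) (CE V E) X R)"
      using to_nat_graph[OF cg] by blast
    show ?thesis using V' n1 n2 by blast
  next
    case False
    have cg: "countable_graph (SV m) (SE m)" using SV_countable[OF m2] .
    have n2: "\<not> hom_exists V E (SV m) (SE m)"
    proof
      assume "hom_exists V E (SV m) (SE m)"
      then obtain \<phi> where "is_hom V E (SV m) (SE m) \<phi>" unfolding hom_exists_def by auto
      then have "walk (SE (2 * L + 1)) L (\<phi> \<circ> p)" using hom_walk Lp(2) unfolding m_def by blast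
      moreover have "(\<phi> \<circ> p) L = (\<phi> \<circ> p) 0" using Lp(3) by simp
      ultimately show False using shift_no_short_odd[OF Lp(1)] by blast
    qed
    obtain V' :: "nat set" and E' where V': "countable_graph V' E'"
      "\<forall>(X::'a set) R. (hom_exists X R V' E' \<longleftrightarrow> hom_exists X R (SV m) (SE m)) \<and>
                    (hom_exists V' E' X R \<longleftrightarrow> hom_exists (SV m) (SE m) X R)"
      using to_nat_graph[OF cg] by blast
    show ?thesis using V' n2 False by blast
  qed
qed

end
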